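(* Let $\mathsf{NL}+\{\mathrm{D}\}$ be $\mathsf{NL}$ extended by the axiom scheme (D) $\varphi\Rightarrow\varphi\oplus\psi$, where $\varphi\oplus\psi:=(\varphi^{*}\otimes\psi^{*})^{*}$. Then $\mathsf{NL}+\{\mathrm{D}\}$ is trivial, i.e. every formula is a theorem of it.
   Context: Formulas are built from a countably infinite set of variables using binary $\otimes,\circ$ and unary ${}^{*}$. Abbreviations: $\varphi\Rightarrow\psi:=(\varphi\circ\psi^{*})^{*}$; $\varphi\Leftrightarrow\psi:=(\varphi\Rightarrow\psi)\otimes(\psi\Rightarrow\varphi)$; $\varphi\not\Leftrightarrow\psi:=(\varphi\Leftrightarrow\psi)^{*}$; $\varphi\not\Leftrightarrow\psi\not\Leftrightarrow\chi:=((\varphi\not\Leftrightarrow\psi)\otimes(\varphi\not\Leftrightarrow\chi))\otimes(\psi\not\Leftrightarrow\chi)$. Axiom schemes: (A1) $\varphi\Rightarrow\varphi$; (A2) $(\varphi\circ\psi)\Rightarrow(\psi\circ\varphi)$; (A3) $\varphi\Rightarrow\varphi^{**}$; (A4) $(\varphi\Rightarrow\psi)\Rightarrow(\varphi\circ\psi)$; (A5) $(\varphi\otimes\psi)\Leftrightarrow(\psi\otimes\varphi)$; (A6) $((\varphi\otimes\psi)\Rightarrow\chi)\Rightarrow((\varphi\otimes\chi^{*})\Rightarrow\psi^{*})$; (A7) $(\varphi\not\Leftrightarrow\psi\not\Leftrightarrow\chi)\Rightarrow((\varphi\Rightarrow\psi)\Rightarrow((\psi\Rightarrow\chi)\Rightarrow(\varphi\Rightarrow\chi)))$.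 Theorems of $\mathsf{NL}$: least set containing all instances of (A1)–(A7) and closed under rules applying only to theorems: from theorems $\varphi\Rightarrow\psi$, $\varphi$ infer $\psi$; from theorems $\varphi,\psi$ infer $\varphi\otimes\psi$; from theorems $\varphi\Leftrightarrow\psi$ and $\chi$ infer $\chi'$ ($\chi'$ from $\chi$ replacing one or more occurrences of $\varphi$ by $\psi$); from a theorem $\varphi\otimes\psi$ infer $\varphi$. Extending by an axiom scheme adds its instances to the initial set. *)

theory Defs
  imports Main
begin

datatype fm = Var nat | Ot fm fm | Ci fm fm | St fm

definition Imp :: "fm \<Rightarrow> fm \<Rightarrow> fm" where
  "Imp a b = St (Ci a (St b))"
definition Iff :: "fm \<Rightarrow> fm \<Rightarrow> fm" where
  "Iff a b = Ot (Imp a b) (Imp b a)"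
definition NIff :: "fm \<Rightarrow> fm \<Rightarrow> fm" where
  "NIff a b = St (Iff a b)"
definition NIff3 :: "fm \<Rightarrow> fm \<Rightarrow> fm \<Rightarrow> fm" where
  "NIff3 a b c = Ot (Ot (NIff a b) (NIff a c)) (NIff b c)"
definition Oplus :: "fm \<Rightarrow> fm \<Rightarrow> fm" where
  "Oplus a b = St (Ot (St a) (St b))"

inductive NL_ax :: "fm \<Rightarrow> bool" where
  A1: "NL_ax (Imp a a)"
| A2: "NL_ax (Imp (Ci a b) (Ci b a))"
| A3: "NL_ax (Imp a (St (St a)))"
| A4: "NL_ax (Imp (Imp a b) (Ci a b))"
| A5: "NL_ax (Iff (Ot a b) (Ot b a))"
| A6: "NL_ax (Imp (Imp (Ot a b) c) (Imp (Ot a (St c)) (St b)))"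
| A7: "NL_ax (Imp (NIff3 a b c) (Imp (Imp a b) (Imp (Imp b c) (Imp a c))))"

inductive repl0 :: "fm \<Rightarrow> fm \<Rightarrow> fm \<Rightarrow> fm \<Rightarrow> bool" where
  r_refl: "repl0 a b x x"
| r_here: "repl0 a b a b"
| r_Ot: "repl0 a b x x' \<Longrightarrow> repl0 a b y y' \<Longrightarrow> repl0 a b (Ot x y) (Ot x' y')"
| r_Ci: "repl0 a b x x' \<Longrightarrow> repl0 a b y y' \<Longrightarrow> repl0 a b (Ci x y) (Ci x' y')"
| r_St: "repl0 a b x x' \<Longrightarrow> repl0 a b (St x) (St x')"

inductive repl :: "fm \<Rightarrow> fm \<Rightarrow> fm \<Rightarrow> fm \<Rightarrow> bool" where
  p_here: "repl a b a b"
| p_Ot1: "repl a b x x' \<Longrightarrow> repl0 a b y y' \<Longrightarrow> repl a b (Ot x y) (Ot x' y')"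
| p_Ot2: "repl0 a b x x' \<Longrightarrow> repl a b y y' \<Longrightarrow> repl a b (Ot x y) (Ot x' y')"
| p_Ci1: "repl a b x x' \<Longrightarrow> repl0 a b y y' \<Longrightarrow> repl a b (Ci x y) (Ci x' y')"
| p_Ci2: "repl0 a b x x' \<Longrightarrow> repl a b y y' \<Longrightarrow> repl a b (Ci x y) (Ci x' y')"
| p_St: "repl a b x x' \<Longrightarrow> repl a b (St x) (St x')"

inductive NL_thm :: "(fm \<Rightarrow> bool) \<Rightarrow> fm \<Rightarrow> bool" for Ax where
  ax_NL: "NL_ax a \<Longrightarrow> NL_thm Ax a"
| ax_ext: "Ax a \<Longrightarrow> NL_thm Ax a"
| MP: "NL_thm Ax (Imp a b) \<Longrightarrow> NL_thm Ax a \<Longrightarrow> NL_thm Ax b"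
| Adj: "NL_thm Ax a \<Longrightarrow> NL_thm Ax b \<Longrightarrow> NL_thm Ax (Ot a b)"
| Rep: "NL_thm Ax (Iff a b) \<Longrightarrow> NL_thm Ax c \<Longrightarrow> repl a b c c' \<Longrightarrow> NL_thm Ax c'"
| Simp: "NL_thm Ax (Ot a b) \<Longrightarrow> NL_thm Ax a"

definition D_ax :: "fm \<Rightarrow> bool" where
  "D_ax c \<longleftrightarrow> (\<exists>a b. c = Imp a (Oplus a b))"

end

theory Submission
  imports Defs
begin

abbreviation T where "T \<equiv> NL_thm D_ax"

lemma ax: "NL_ax a \<Longrightarrow> T a" by (rule ax_NL)

lemma ci_swap_st: assumes "T (St (Ci a b))" shows "T (St (Ci b a))"
proof -
  have 1: "T (Imp (Ci a b) (Ci b a))" by (rule ax, rule A2)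
  have 2: "T (Imp (Ci b a) (Ci a b))" by (rule ax, rule A2)
  have "T (Iff (Ci a b) (Ci b a))" unfolding Iff_def by (rule Adj[OF 1 2])
  then show ?thesis using assms by (rule Rep) (rule p_St, rule p_here)
qed

lemma DN: "T (Imp (St (St y)) y)"
proof -
  have "T (Imp (St y) (St y))" by (rule ax, rule A1)
  then have "T (St (Ci (St y) (St (St y))))" by (simp add: Imp_def)
  then have "T (St (Ci (St (St y)) (St y)))" by (rule ci_swap_st)
  then show ?thesis by (simp add: Imp_def)
qed

lemma IffDN: "T (Iff x (St (St x)))"
  unfolding Iff_def by (rule Adj, rule ax, rule A3, rule DN)

lemma Frule: assumes "T (Imp (Ot x y) z)" shows "T (Imp (Ot x (St z)) (St y))"
proof -
  have "T (Imp (Imp (Ot x y) z) (Imp (Ot x (St z)) (St y)))" by (rule ax, rule A6)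
  then show ?thesis using assms by (rule MP)
qed

lemma A4rule: assumes "T (Imp a b)" shows "T (Ci a b)"
proof -
  have "T (Imp (Imp a b) (Ci a b))" by (rule ax, rule A4)
  then show ?thesis using assms by (rule MP)
qed

lemma A2rule: assumes "T (Ci a b)" shows "T (Ci b a)"
proof -
  have "T (Imp (Ci a b) (Ci b a))" by (rule ax, rule A2)
  then show ?thesis using assms by (rule MP)
qed

lemma Drule: "T (Imp a (Oplus a b))"
  by (rule ax_ext) (auto simp: D_ax_def)

lemma pair_all: assumes t: "T t" and n: "T (St t)" shows "T (St (St b))"
proof -
  have "T (Oplus t b)" by (rule MP[OF Drule t])
  then have O: "T (St (Ot (St t) (St b)))" by (simp add: Oplus_def)
  have A: "T (Imp (Imp (Ot (St t) (St b)) (Ot (St t) (St b)))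
      (Imp (Ot (St t) (St (Ot (St t) (St b)))) (St (St b))))"
    by (rule ax, rule A6)
  have P: "T (Imp (Ot (St t) (St b)) (Ot (St t) (St b)))" by (rule ax, rule A1)
  show ?thesis by (rule MP[OF MP[OF A P] Adj[OF n O]])
qed

lemma pair_exists: "\<exists>t. T t \<and> T (St t)"
proof -
  define x where "x = Var 0"
  define P where "P = Ot (St (St x)) x"
  define Q where "Q = Ot (St (St x)) (St P)"
  have "T (Imp P P)" by (rule ax, rule A1)
  then have "T (Imp (Ot (St (St x)) (St P)) (St x))" unfolding P_def by (rule Frule)
  then have "T (Ci Q (St x))" unfolding Q_def P_def by (rule A4rule)
  then have c1: "T (Ci (St x) Q)" by (rule A2rule)
  have X2: "T (Ci (St x) (St (St Q)))"
    using IffDN c1 by (rule Rep) (rule p_Ci2, rule r_refl, rule p_here)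
  have "T (Imp (St x) (Oplus (St x) P))" by (rule Drule)
  then have N: "T (St (Ci (St x) (St (St Q))))" by (simp add: Imp_def Oplus_def Q_def)
  show ?thesis using X2 N by blast
qed

theorem proposition5p10:
  shows "\<forall>\<phi>. NL_thm D_ax \<phi>"
proof
  fix \<phi>
  obtain t where "T t" "T (St t)" using pair_exists by blast
  then have "T (St (St \<phi>))" by (rule pair_all)
  then show "NL_thm D_ax \<phi>" by (rule MP[OF DN])
qed

end
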